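(* Let $P$ be a three-dimensional zonotope which is not a prism, and let $E$ be an edge of $P$ with $\#B(E)=8$. Then there exists an edge $M$ of $P$ not parallel to $E$ with $\#B(M)\ge 8$.
   Context: A zonotope is a Minkowski sum of finitely many segments. For an edge $E$ of a three-dimensional zonotope $P$, the belt $B(E)$ is the set of facets of $P$ containing a translate of $E$ as an edge, and $\#B(E)$ is the number of facets in it. A prism (cylinder) is a set $Q+S$ with $Q$ a convex polygon and $S$ a segment not parallel to the plane of $Q$. *)

theory Defs
  imports "HOL-Analysis.Analysis"
begin

fun msum_list :: "'a::real_vector set list \<Rightarrow> 'a set" where
  "msum_list [] = {0}"
| "msum_list (S # Ss) = {x + y | x y. x \<in> S \<and> y \<in> msum_list Ss}"

definition zonotope :: "'a::euclidean_space set \<Rightarrow> bool" where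
  "zonotope P \<longleftrightarrow> (\<exists>segs. P = msum_list (map (\<lambda>(a, b). closed_segment a b) segs))"

definition direction :: "'a::euclidean_space set \<Rightarrow> 'a set" where
  "direction S = span {x - y | x y. x \<in> S \<and> y \<in> S}"

definition belt :: "'a::euclidean_space set \<Rightarrow> 'a set \<Rightarrow> 'a set set" where
  "belt P E = {F. F facet_of P \<and> (\<exists>t. ((\<lambda>x. t + x) ` E) edge_of F)}"

definition prism :: "'a::euclidean_space set \<Rightarrow> bool" where
  "prism P \<longleftrightarrow> (\<exists>Q a b. polytope Q \<and> aff_dim Q = 2 \<and> a \<noteq> b \<and>
      b - a \<notin> direction Q \<and>
      P = {x + y | x y. x \<in> Q \<and> y \<in> closed_segment a b})"

end

theory Submission
  imports Defs "HOL-Analysis.Cross3"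
begin

type_synonym v3 = "real^3"

lemma msum_list_eq_sum_list: "msum_list Ss = sum_list Ss"
  by (induction Ss) (auto simp: set_plus_def)

definition argmx :: "v3 \<Rightarrow> v3 set \<Rightarrow> v3 set" where
  "argmx c S = {x\<in>S. \<forall>y\<in>S. c \<bullet> y \<le> c \<bullet> x}"

lemma argmx_plus:
  assumes "argmx c A \<noteq> {}" "argmx c B \<noteq> {}"
  shows "argmx c (A + B) = argmx c A + argmx c B"
proof
  obtain a0 where a0: "a0 \<in> argmx c A" using assms by auto
  obtain b0 where b0: "b0 \<in> argmx c B" using assms by auto
  show "argmx c (A + B) \<subseteq> argmx c A + argmx c B"
  proof
    fix x assume x: "x \<in> argmx c (A + B)"
    then obtain a b where ab: "a \<in> A" "b \<in> B" "x = a + b" unfolding argmx_def set_plus_def by auto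
    have "a0 + b \<in> A + B" "a + b0 \<in> A + B" using a0 b0 ab by (auto simp: argmx_def)
    then have "c \<bullet> (a0 + b) \<le> c \<bullet> x" "c \<bullet> (a + b0) \<le> c \<bullet> x" using x by (auto simp: argmx_def)
    then have "c \<bullet> a0 \<le> c \<bullet> a" "c \<bullet> b0 \<le> c \<bullet> b" using ab by (auto simp: inner_add_right)
    then have "a \<in> argmx c A" "b \<in> argmx c B" using a0 b0 ab by (auto simp: argmx_def)
    then show "x \<in> argmx c A + argmx c B" using ab by auto
  qed
next
  show "argmx c A + argmx c B \<subseteq> argmx c (A + B)"
    by (auto simp: argmx_def set_plus_def inner_add_right intro!: add_mono)
qed

definition sface :: "v3 \<Rightarrow> v3 \<times> v3 \<Rightarrow> v3 set" where
  "sface c ab = (if c \<bullet> fst ab = c \<bullet> snd ab then closed_segment (fst ab) (snd ab)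
     else if c \<bullet> snd ab < c \<bullet> fst ab then {fst ab} else {snd ab})"

lemma argmx_seg: "argmx c (closed_segment a b) = sface c (a, b)"
proof -
  have inn: "c \<bullet> ((1 - u) *\<^sub>R a + u *\<^sub>R b) = c \<bullet> a + u * (c \<bullet> b - c \<bullet> a)" for u
    by (simp add: inner_add_right algebra_simps)
  show ?thesis
  proof (cases "c \<bullet> a = c \<bullet> b")
    case True
    then show ?thesis unfolding argmx_def sface_def closed_segment_def by (auto simp: inn)
  next
    case False
    show ?thesis
    proof (cases "c \<bullet> b < c \<bullet> a")
      case lt: True
      have "x \<in> argmx c (closed_segment a b) \<longleftrightarrow> x = a" for x
      proof
        assume "x \<in> argmx c (closed_segment a b)"
        then have xs: "x \<in> closed_segment a b" and m: "c \<bullet> a \<le> c \<bullet> x"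
          unfolding argmx_def by auto
        then obtain u where u: "0 \<le> u" "u \<le> 1" "x = (1 - u) *\<^sub>R a + u *\<^sub>R b"
          unfolding closed_segment_def by auto
        have "u * (c \<bullet> b - c \<bullet> a) \<ge> 0" using m u inn by simp
        then have "u = 0" using lt u by (smt (verit, best) mult_pos_neg)
        then show "x = a" using u by simp
      next
        assume "x = a"
        then show "x \<in> argmx c (closed_segment a b)"
          unfolding argmx_def closed_segment_def using lt
          by (auto simp: inn mult_le_0_iff intro!: exI[of _ 0]) 
      qed
      then show ?thesis using False lt unfolding sface_def by auto
    next
      case ge: False
      then have lt: "c \<bullet> a < c \<bullet> b" using False by auto
      have "x \<in> argmx c (closed_segment a b) \<longleftrightarrow> x = b" for x
      proof
        assume "x \<in> argmx c (closed_segment a b)"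
        then have xs: "x \<in> closed_segment a b" and m: "c \<bullet> b \<le> c \<bullet> x"
          unfolding argmx_def by auto
        then obtain u where u: "0 \<le> u" "u \<le> 1" "x = (1 - u) *\<^sub>R a + u *\<^sub>R b"
          unfolding closed_segment_def by auto
        have "u * (c \<bullet> b - c \<bullet> a) \<ge> (c \<bullet> b - c \<bullet> a)" using m u inn by simp
        then have "u \<ge> 1" using lt by simp
        then have "u = 1" using u by simp
        then show "x = b" using u by simp
      next
        assume x: "x = b"
        have hh: "c \<bullet> a + u * (c \<bullet> b - c \<bullet> a) \<le> c \<bullet> b" if "u \<le> 1" for u
        proof -
          have "0 \<le> (1 - u) * (c \<bullet> b - c \<bullet> a)" using lt that by simp
          then show ?thesis by (simp add: algebra_simps)
        qed
        show "x \<in> argmx c (closed_segment a b)"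
          unfolding argmx_def closed_segment_def using lt x
          by (auto simp: inn hh intro!: exI[of _ 1]) 
      qed
      then show ?thesis using False ge unfolding sface_def by auto
    qed
  qed
qed

lemma sface_ne: "sface c ab \<noteq> {}"
  by (auto simp: sface_def)

lemma sum_list_ne: "(\<And>S. S \<in> set Ss \<Longrightarrow> S \<noteq> {}) \<Longrightarrow> sum_list Ss \<noteq> ({}::'a::comm_monoid_add set)"
proof (induction Ss)
  case (Cons S Ss)
  then obtain x y where "x \<in> S" "y \<in> sum_list Ss" by fastforce
  then show ?case by (auto simp: set_plus_def)
qed auto

definition zset :: "(v3 \<times> v3) list \<Rightarrow> v3 set" where
  "zset segs = sum_list (map (\<lambda>(a, b). closed_segment a b) segs)"

lemma argmx_zset: "argmx c (zset segs) = sum_list (map (sface c) segs)"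
proof (induction segs)
  case Nil
  then show ?case by (auto simp: zset_def argmx_def)
next
  case (Cons ab segs)
  obtain a b where [simp]: "ab = (a, b)" by fastforce
  have ne: "sum_list (map (sface c) segs) \<noteq> {}"
    by (rule sum_list_ne) (auto simp: sface_ne)
  have "argmx c (zset (ab # segs)) = argmx c (closed_segment a b + zset segs)"
    by (simp add: zset_def)
  also have "\<dots> = argmx c (closed_segment a b) + argmx c (zset segs)"
    by (rule argmx_plus) (use Cons ne argmx_seg sface_ne in auto)
  also have "\<dots> = sum_list (map (sface c) (ab # segs))"
    using Cons by (simp add: argmx_seg)
  finally show ?case .
qed

lemma dir_mono: "S \<subseteq> T \<Longrightarrow> direction S \<subseteq> direction T"
  unfolding direction_def by (rule span_mono) blast

lemma dir_translate: "direction ((\<lambda>x. t + x) ` S) = direction S"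
proof -
  have "{x - y |x y. x \<in> (\<lambda>x. t + x) ` S \<and> y \<in> (\<lambda>x. t + x) ` S} = {x - y |x y. x \<in> S \<and> y \<in> S}"
  proof (rule set_eqI, rule iffI)
    fix z assume "z \<in> {x - y |x y. x \<in> (\<lambda>x. t + x) ` S \<and> y \<in> (\<lambda>x. t + x) ` S}"
    then obtain x y where "x \<in> S" "y \<in> S" "z = (t + x) - (t + y)" by auto
    then show "z \<in> {x - y |x y. x \<in> S \<and> y \<in> S}" by auto
  next
    fix z assume "z \<in> {x - y |x y. x \<in> S \<and> y \<in> S}"
    then obtain x y where xy: "x \<in> S" "y \<in> S" "z = (t + x) - (t + y)" by auto
    have "t + x \<in> (\<lambda>x. t + x) ` S" "t + y \<in> (\<lambda>x. t + x) ` S" using xy by auto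
    then show "z \<in> {x - y |x y. x \<in> (\<lambda>x. t + x) ` S \<and> y \<in> (\<lambda>x. t + x) ` S}"
      using xy(3) by blast
  qed
  then show ?thesis by (simp add: direction_def)
qed

lemma span_UN_span: "span (\<Union>i\<in>I. span (S i)) = span (\<Union>i\<in>I. S i)"
proof -
  have "(\<Union>i\<in>I. span (S i)) \<subseteq> span (\<Union>i\<in>I. S i)"
    by (intro UN_least span_mono) auto
  moreover have "(\<Union>i\<in>I. S i) \<subseteq> span (\<Union>i\<in>I. span (S i))"
  proof -
    have "(\<Union>i\<in>I. S i) \<subseteq> (\<Union>i\<in>I. span (S i))" by (intro UN_mono) (auto intro: span_base)
    also have "\<dots> \<subseteq> span (\<Union>i\<in>I. span (S i))" by (rule span_superset)
    finally show ?thesis .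
  qed
  ultimately show ?thesis unfolding span_eq by simp
qed

lemma span_Un_span2: "span (span A \<union> span B) = span (A \<union> B)"
proof -
  have "span A \<union> span B \<subseteq> span (A \<union> B)" by (simp add: span_mono)
  moreover have "A \<union> B \<subseteq> span (span A \<union> span B)"
  proof -
    have "A \<union> B \<subseteq> span A \<union> span B" by (auto intro: span_base)
    also have "\<dots> \<subseteq> span (span A \<union> span B)" by (rule span_superset)
    finally show ?thesis .
  qed
  ultimately show ?thesis unfolding span_eq by simp
qed

lemma dir_plus:
  fixes A B :: "'a::euclidean_space set"
  assumes "A \<noteq> {}" "B \<noteq> {}"
  shows "direction (A + B) = span (direction A \<union> direction B)"
proof -
  obtain a0 where a0: "a0 \<in> A" using assms by auto
  obtain b0 where b0: "b0 \<in> B" using assms by auto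
  let ?X = "{x - y |x y. x \<in> A + B \<and> y \<in> A + B}"
  let ?DA = "{x - y |x y. x \<in> A \<and> y \<in> A}"
  let ?DB = "{x - y |x y. x \<in> B \<and> y \<in> B}"
  have "span ?X = span (?DA \<union> ?DB)"
    unfolding span_eq
  proof
    show "?X \<subseteq> span (?DA \<union> ?DB)"
    proof
      fix z assume "z \<in> ?X"
      then obtain a b a' b' where z: "a \<in> A" "b \<in> B" "a' \<in> A" "b' \<in> B" "z = (a + b) - (a' + b')"
        by (auto simp: set_plus_def)
      then have "z = (a - a') + (b - b')" by (simp add: algebra_simps)
      moreover have "a - a' \<in> span (?DA \<union> ?DB)" using z by (intro span_base) blast
      moreover have "b - b' \<in> span (?DA \<union> ?DB)" using z by (intro span_base) blast
      ultimately show "z \<in> span (?DA \<union> ?DB)" by (simp add: span_add)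
    qed
    show "?DA \<union> ?DB \<subseteq> span ?X"
    proof
      fix z assume "z \<in> ?DA \<union> ?DB"
      then have "z \<in> ?X"
      proof
        assume "z \<in> ?DA"
        then obtain a a' where "a \<in> A" "a' \<in> A" "z = a - a'" by auto
        then have "z = (a + b0) - (a' + b0)" "a + b0 \<in> A + B" "a' + b0 \<in> A + B" using b0 by auto
        then show ?thesis by blast
      next
        assume "z \<in> ?DB"
        then obtain b b' where "b \<in> B" "b' \<in> B" "z = b - b'" by auto
        then have "z = (a0 + b) - (a0 + b')" "a0 + b \<in> A + B" "a0 + b' \<in> A + B" using a0 by auto
        then show ?thesis by blast
      qed
      then show "z \<in> span ?X" by (rule span_base)
    qed
  qed
  moreover have "span (direction A \<union> direction B) = span (?DA \<union> ?DB)"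
    unfolding direction_def by (rule span_Un_span2)
  ultimately show ?thesis by (simp add: direction_def)
qed

lemma dir_seg: "direction (closed_segment a b) = span {b - a}"
proof -
  let ?X = "{x - y |x y. x \<in> closed_segment a b \<and> y \<in> closed_segment a b}"
  have "span ?X = span {b - a}"
    unfolding span_eq
  proof
    show "?X \<subseteq> span {b - a}"
    proof
      fix z assume "z \<in> ?X"
      then obtain u v where "z = ((1 - u) *\<^sub>R a + u *\<^sub>R b) - ((1 - v) *\<^sub>R a + v *\<^sub>R b)"
        unfolding closed_segment_def by auto
      then have "z = (u - v) *\<^sub>R (b - a)" by (simp add: algebra_simps)
      then show "z \<in> span {b - a}" by (simp add: span_base span_scale)
    qed
    have "b - a \<in> ?X" by blast
    then show "{b - a} \<subseteq> span ?X" by (simp add: span_base)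
  qed
  then show ?thesis by (simp add: direction_def)
qed

lemma dir_sing: "direction {a} = {0}"
  by (simp add: direction_def)

lemma dir_sum_list:
  fixes Ss :: "'a::euclidean_space set list"
  assumes "\<And>S. S \<in> set Ss \<Longrightarrow> S \<noteq> {}"
  shows "direction (sum_list Ss) = span (\<Union>S\<in>set Ss. direction S)"
  using assms
proof (induction Ss)
  case Nil
  then show ?case by (simp add: dir_sing)
next
  case (Cons S Ss)
  have "direction (sum_list (S # Ss)) = direction (S + sum_list Ss)" by simp
  also have "\<dots> = span (direction S \<union> direction (sum_list Ss))"
    by (rule dir_plus) (use Cons.prems in \<open>auto intro!: sum_list_ne\<close>)
  also have "\<dots> = span (direction S \<union> span (\<Union>S\<in>set Ss. direction S))"
    using Cons by simp
  also have "\<dots> = span (span (direction S) \<union> span (\<Union>S\<in>set Ss. direction S))"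
    by (simp add: direction_def span_span)
  also have "\<dots> = span (\<Union>S\<in>set (S # Ss). direction S)"
    by (simp add: span_Un_span2)
  finally show ?case .
qed

definition gens :: "(v3 \<times> v3) list \<Rightarrow> v3 set" where
  "gens segs = (\<lambda>ab. snd ab - fst ab) ` set segs"

definition Gc :: "v3 \<Rightarrow> (v3 \<times> v3) list \<Rightarrow> v3 set" where
  "Gc c segs = {g \<in> gens segs. c \<bullet> g = 0}"

lemma dir_sface: "direction (sface c ab) = (if c \<bullet> (snd ab - fst ab) = 0 then span {snd ab - fst ab} else {0})"
  by (auto simp: sface_def dir_seg dir_sing inner_diff_right)

lemma dir_argmx: "direction (argmx c (zset segs)) = span (Gc c segs)"
proof -
  have "direction (argmx c (zset segs)) = span (\<Union>ab\<in>set segs. direction (sface c ab))"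
    unfolding argmx_zset by (subst dir_sum_list) (auto simp: sface_ne)
  also have "\<dots> = span (\<Union>ab\<in>set segs. span (if c \<bullet> (snd ab - fst ab) = 0 then {snd ab - fst ab} else {}))"
    unfolding dir_sface by (intro arg_cong[where f=span] SUP_cong) auto
  also have "\<dots> = span (\<Union>ab\<in>set segs. (if c \<bullet> (snd ab - fst ab) = 0 then {snd ab - fst ab} else {}))"
    by (rule span_UN_span)
  also have "(\<Union>ab\<in>set segs. (if c \<bullet> (snd ab - fst ab) = 0 then {snd ab - fst ab} else {})) = Gc c segs"
    unfolding Gc_def gens_def by (auto split: if_splits)
  finally show ?thesis .
qed

lemma argmx_0: "argmx 0 S = S"
  by (simp add: argmx_def)

lemma dir_zset: "direction (zset segs) = span (gens segs)"
  using dir_argmx[of 0 segs] by (simp add: argmx_0 Gc_def)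

lemma aff_dim_dir:
  fixes S :: "'a::euclidean_space set"
  assumes "S \<noteq> {}" shows "aff_dim S = int (dim (direction S))"
proof -
  obtain a where a: "a \<in> S" using assms by auto
  have "aff_dim S = int (dim ((+) (- a) ` S))"
    by (rule aff_dim_eq_dim) (simp add: a hull_inc)
  also have "dim ((+) (- a) ` S) = dim (direction S)"
  proof -
    have "span ((+) (- a) ` S) = direction S"
      unfolding direction_def span_eq
    proof
      show "(+) (- a) ` S \<subseteq> span {x - y |x y. x \<in> S \<and> y \<in> S}"
        using a by (auto intro!: span_base)
      show "{x - y |x y. x \<in> S \<and> y \<in> S} \<subseteq> span ((+) (- a) ` S)"
      proof
        fix z assume "z \<in> {x - y |x y. x \<in> S \<and> y \<in> S}"
        then obtain x y where "x \<in> S" "y \<in> S" "z = (- a + x) - (- a + y)" by auto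
        then show "z \<in> span ((+) (- a) ` S)"
          by (metis image_eqI span_base span_diff)
      qed
    qed
    then show ?thesis by (metis dim_span)
  qed
  finally show ?thesis .
qed

lemma zset_ne: "zset segs \<noteq> {}"
  unfolding zset_def by (rule sum_list_ne) auto

lemma zset_hull: "zset segs = convex hull (sum_list (map (\<lambda>(a, b). {a, b}) segs))"
proof (induction segs)
  case Nil
  then show ?case by (simp add: zset_def)
next
  case (Cons ab segs)
  then show ?case
    by (cases ab) (simp add: zset_def convex_hull_set_plus segment_convex_hull)
qed

lemma polytope_zset: "polytope (zset segs)"
proof -
  have "finite (sum_list (map (\<lambda>(a, b). {a, b}) segs) :: v3 set)"
    by (induction segs) (auto simp: finite_set_plus)
  then show ?thesis unfolding polytope_def zset_hull by blast
qed

lemma convex_zset: "convex (zset segs)"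
  using polytope_zset polytope_imp_convex by blast

lemma argmx_ne: "argmx c (zset segs) \<noteq> {}"
  unfolding argmx_zset by (rule sum_list_ne) (auto simp: sface_ne)

lemma argmx_face: "argmx c (zset segs) face_of zset segs"
proof -
  obtain x0 where x0: "x0 \<in> argmx c (zset segs)" using argmx_ne by blast
  have "argmx c (zset segs) = zset segs \<inter> {x. c \<bullet> x = c \<bullet> x0}"
    using x0 unfolding argmx_def by (auto intro: order_antisym)
  moreover have "zset segs \<inter> {x. c \<bullet> x = c \<bullet> x0} face_of zset segs"
    by (rule face_of_Int_supporting_hyperplane_le) (use x0 convex_zset in \<open>auto simp: argmx_def\<close>)
  ultimately show ?thesis by simp
qed

lemma face_argmx:
  assumes "F face_of zset segs" "F \<noteq> {}"
  shows "\<exists>c. F = argmx c (zset segs)"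
proof -
  have "F exposed_face_of zset segs"
    using assms polytope_zset polytope_imp_polyhedron exposed_face_of_polyhedron by blast
  then obtain a b where ab: "zset segs \<subseteq> {x. a \<bullet> x \<le> b}" "F = zset segs \<inter> {x. a \<bullet> x = b}"
    unfolding exposed_face_of_def by blast
  obtain f where f: "f \<in> F" using assms by auto
  have "F = argmx a (zset segs)"
    using ab f unfolding argmx_def by (auto intro: order_antisym)
  then show ?thesis by blast
qed

definition ind2 :: "v3 \<Rightarrow> v3 \<Rightarrow> bool" where
  "ind2 e g \<longleftrightarrow> e \<noteq> 0 \<and> g \<notin> span {e}"

lemma ind2_nz: "ind2 e g \<Longrightarrow> e \<noteq> 0" "ind2 e g \<Longrightarrow> g \<noteq> 0"
  by (auto simp: ind2_def span_zero)

lemma span_sing_iff: "x \<in> span {e} \<longleftrightarrow> (\<exists>k. x = k *\<^sub>R e)"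
  by (auto simp: span_singleton)

lemma ind2_sym: assumes "ind2 e g" shows "ind2 g e"
proof -
  have g0: "g \<noteq> 0" using ind2_nz assms by blast
  have "e \<notin> span {g}"
  proof
    assume "e \<in> span {g}"
    then obtain k where k: "e = k *\<^sub>R g" by (auto simp: span_sing_iff)
    then have "k \<noteq> 0" using assms by (auto simp: ind2_def)
    then have "g = (1/k) *\<^sub>R e" using k by simp
    then show False using assms by (auto simp: ind2_def span_sing_iff)
  qed
  then show ?thesis using g0 by (simp add: ind2_def)
qed

lemma dim_pair: "ind2 e g \<Longrightarrow> dim (span {e, g}) = 2"
  by (simp add: dim_insert ind2_def span_zero insert_commute[of e g] del: dim_span)
    (auto simp: dim_insert ind2_def span_zero)

lemma dim_sing: "(e::v3) \<noteq> 0 \<Longrightarrow> dim (span {e}) = 1"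
  using dim_insert[of e "{}"] by (simp add: span_empty)

lemma dim3: "dim (S::v3 set) \<le> 3"
  using dim_subset_UNIV_cart[of S] by simp

lemma subspace_eq_dim:
  fixes S T :: "v3 set"
  assumes "subspace S" "subspace T" "S \<subseteq> T" "dim T \<le> dim S"
  shows "S = T"
  using subspace_dim_equal assms by blast

lemma plane_eq:
  assumes "ind2 e g" "e \<in> span A" "g \<in> span A" "dim (span A) \<le> 2"
  shows "span A = span {e, g}"
proof -
  have "span {e, g} \<subseteq> span A" using assms by (simp add: span_minimal subspace_span)
  then show ?thesis using subspace_eq_dim[of "span {e,g}" "span A"] assms dim_pair by auto
qed

lemma line_eq:
  fixes e :: v3
  assumes "e \<noteq> 0" "e \<in> span A" "dim (span A) \<le> 1"
  shows "span A = span {e}"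
proof -
  have "span {e} \<subseteq> span A" using assms by (simp add: span_minimal subspace_span)
  then show ?thesis using subspace_eq_dim[of "span {e}" "span A"] assms dim_sing by auto
qed

lemma ind2_span_pair_l: "ind2 e g \<Longrightarrow> e \<in> span {e, g}" "ind2 e g \<Longrightarrow> g \<in> span {e, g}"
  by (auto intro: span_base)

lemma cross_nz: "ind2 e g \<Longrightarrow> cross3 e g \<noteq> 0"
  by (auto simp: ind2_def cross_eq_0 collinear_lemma span_sing_iff)

lemma perp_parallel:
  assumes "ind2 e g" "c \<bullet> e = 0" "c \<bullet> g = 0"
  shows "\<exists>k. c = k *\<^sub>R (cross3 e g)"
proof -
  have "cross3 c (cross3 e g) = 0" using assms by (simp add: Lagrange)
  then have "collinear {0, cross3 e g, c}" by (simp add: cross_eq_0 insert_commute)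
  then show ?thesis using cross_nz[OF assms(1)] by (auto simp: collinear_lemma)
qed

lemma perp_in_plane:
  assumes "ind2 e g" "h \<bullet> (cross3 e g) = 0"
  shows "h \<in> span {e, g}"
proof -
  let ?H = "{x. (cross3 e g) \<bullet> x = 0}"
  have "subspace ?H" by (rule subspace_hyperplane)
  have "dim ?H = 2" using dim_hyperplane[OF cross_nz[OF assms(1)]] by simp
  have "span {e, g} \<subseteq> ?H"
    by (rule span_minimal) (use \<open>subspace ?H\<close> in \<open>auto simp: dot_cross_self\<close>)
  then have "span {e, g} = ?H"
    using subspace_eq_dim[of "span {e,g}" ?H] \<open>subspace ?H\<close> \<open>dim ?H = 2\<close> dim_pair[OF assms(1)] by auto
  then show ?thesis using assms(2) by (simp add: inner_commute)
qed

lemma argmx_scale: "0 < k \<Longrightarrow> argmx (k *\<^sub>R c) S = argmx c S"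
  by (auto simp: argmx_def)

lemma aff_dim_zset: "aff_dim (zset segs) = int (dim (span (gens segs)))"
  using aff_dim_dir[OF zset_ne] dir_zset by simp

lemma aff_dim_argmx: "aff_dim (argmx c (zset segs)) = int (dim (span (Gc c segs)))"
  using aff_dim_dir[OF argmx_ne] dir_argmx by simp

lemma argmx_neq_opp:
  assumes "aff_dim (zset segs) = 3" "c \<noteq> 0"
  shows "argmx c (zset segs) \<noteq> argmx (- c) (zset segs)"
proof
  assume eq: "argmx c (zset segs) = argmx (- c) (zset segs)"
  obtain x0 where x0: "x0 \<in> argmx c (zset segs)" using argmx_ne by blast
  then have x0': "x0 \<in> argmx (- c) (zset segs)" using eq by simp
  have lev: "c \<bullet> y = c \<bullet> x0" if "y \<in> zset segs" for y
    using x0 x0' that unfolding argmx_def by (auto intro: order_antisym)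
  let ?H = "{z. c \<bullet> z = 0}"
  have "{x - y |x y. x \<in> zset segs \<and> y \<in> zset segs} \<subseteq> ?H"
    using lev by (auto simp: inner_diff_right)
  then have "direction (zset segs) \<subseteq> ?H"
    unfolding direction_def by (rule span_minimal) (rule subspace_hyperplane)
  then have "dim (direction (zset segs)) \<le> dim ?H" by (rule dim_subset)
  also have "dim ?H = 2" using dim_hyperplane[OF assms(2)] by simp
  finally show False using assms(1) aff_dim_dir[OF zset_ne, of segs] by simp
qed

lemma facet_char:
  assumes "F facet_of zset segs" "aff_dim (zset segs) = 3"
  shows "\<exists>c. c \<noteq> 0 \<and> F = argmx c (zset segs) \<and> dim (span (Gc c segs)) = 2"
proof -
  have F: "F face_of zset segs" "F \<noteq> {}" "aff_dim F = 2"
    using assms by (auto simp: facet_of_def)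
  obtain c where c: "F = argmx c (zset segs)" using face_argmx F by blast
  have "c \<noteq> 0" using c F assms(2) by (auto simp: argmx_0)
  moreover have "dim (span (Gc c segs)) = 2" using F(3) c aff_dim_argmx by simp
  ultimately show ?thesis using c by blast
qed

lemma edge_char:
  assumes "E edge_of zset segs"
  shows "\<exists>c. E = argmx c (zset segs) \<and> dim (span (Gc c segs)) = 1"
proof -
  have E: "E face_of zset segs" "aff_dim E = 1" using assms by (auto simp: edge_of_def)
  then have "E \<noteq> {}" by auto
  then obtain c where c: "E = argmx c (zset segs)" using face_argmx E by blast
  moreover have "dim (span (Gc c segs)) = 1" using E(2) c aff_dim_argmx by simp
  ultimately show ?thesis by blast
qed

lemma argmx_is_facet:
  assumes "aff_dim (zset segs) = 3" "dim (span (Gc c segs)) = 2"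
  shows "argmx c (zset segs) facet_of zset segs"
  using assms argmx_face argmx_ne aff_dim_argmx unfolding facet_of_def by simp

lemma argmx_is_edge:
  assumes "dim (span (Gc c segs)) = 1"
  shows "argmx c (zset segs) edge_of zset segs"
  using assms argmx_face aff_dim_argmx unfolding edge_of_def by simp

lemma plus_translate:
  fixes A B :: "'a::ab_group_add set"
  shows "(\<lambda>x. s + x) ` A + (\<lambda>x. t + x) ` B = (\<lambda>x. (s + t) + x) ` (A + B)"
  unfolding set_plus_def by (auto simp: image_iff algebra_simps) (metis add.assoc add.left_commute)+

lemma argmx_translate:
  assumes "\<And>g. g \<in> gens segs \<Longrightarrow> (c1 \<bullet> g = 0 \<longleftrightarrow> c2 \<bullet> g = 0)"
  shows "\<exists>t. argmx c1 (zset segs) = (\<lambda>x. t + x) ` argmx c2 (zset segs)"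
  using assms unfolding argmx_zset
proof (induction segs)
  case Nil
  then show ?case by (intro exI[of _ 0]) auto
next
  case (Cons ab segs)
  obtain t where t: "sum_list (map (sface c1) segs) = (\<lambda>x. t + x) ` sum_list (map (sface c2) segs)"
    using Cons by (auto simp: gens_def)
  obtain a b where ab: "ab = (a, b)" by fastforce
  have g: "c1 \<bullet> (b - a) = 0 \<longleftrightarrow> c2 \<bullet> (b - a) = 0" using Cons.prems ab by (auto simp: gens_def)
  have "\<exists>s. sface c1 ab = (\<lambda>x. s + x) ` sface c2 ab"
  proof (cases "c2 \<bullet> (b - a) = 0")
    case True
    then show ?thesis using g ab by (intro exI[of _ 0]) (auto simp: sface_def inner_diff_right)
  next
    case False
    then have n1: "c1 \<bullet> a \<noteq> c1 \<bullet> b" "c2 \<bullet> a \<noteq> c2 \<bullet> b" using g by (auto simp: inner_diff_right)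
    have "\<exists>p. sface c1 ab = {p}" using n1 ab by (auto simp: sface_def)
    then obtain p where p: "sface c1 ab = {p}" by blast
    have "\<exists>q. sface c2 ab = {q}" using n1 ab by (auto simp: sface_def)
    then obtain q where q: "sface c2 ab = {q}" by blast
    show ?thesis using p q by (intro exI[of _ "p - q"]) auto
  qed
  then obtain s where s: "sface c1 ab = (\<lambda>x. s + x) ` sface c2 ab" by blast
  show ?case using s t by (auto simp: plus_translate)
qed

lemma argmx_subset:
  assumes "\<And>g. g \<in> gens segs \<Longrightarrow> c2 \<bullet> g \<noteq> 0 \<Longrightarrow> (c1 \<bullet> g < 0 \<longleftrightarrow> c2 \<bullet> g < 0) \<and> c1 \<bullet> g \<noteq> 0"
  shows "argmx c1 (zset segs) \<subseteq> argmx c2 (zset segs)"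
  using assms unfolding argmx_zset
proof (induction segs)
  case Nil
  then show ?case by simp
next
  case (Cons ab segs)
  have IH: "sum_list (map (sface c1) segs) \<subseteq> sum_list (map (sface c2) segs)"
    using Cons by (auto simp: gens_def)
  obtain a b where ab: "ab = (a, b)" by fastforce
  have g: "c2 \<bullet> (b - a) \<noteq> 0 \<Longrightarrow> (c1 \<bullet> (b - a) < 0 \<longleftrightarrow> c2 \<bullet> (b - a) < 0) \<and> c1 \<bullet> (b - a) \<noteq> 0"
    using Cons.prems ab by (auto simp: gens_def)
  have "sface c1 ab \<subseteq> sface c2 ab"
  proof (cases "c2 \<bullet> (b - a) = 0")
    case True
    then show ?thesis using ab by (auto simp: sface_def inner_diff_right)
  next
    case False
    then show ?thesis using g ab by (auto simp: sface_def inner_diff_right)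
  qed
  then show ?case using IH by (simp add: set_plus_mono2)
qed

definition Pl :: "v3 \<Rightarrow> (v3 \<times> v3) list \<Rightarrow> v3 set set" where
  "Pl w segs = {span {w, g} | g. g \<in> gens segs \<and> g \<notin> span {w}}"

definition nrm :: "v3 set \<Rightarrow> v3" where
  "nrm \<pi> = (SOME n. n \<noteq> 0 \<and> (\<forall>x\<in>\<pi>. n \<bullet> x = 0))"

lemma perp_span: "(\<And>x. x \<in> A \<Longrightarrow> c \<bullet> x = 0) \<Longrightarrow> y \<in> span A \<Longrightarrow> c \<bullet> y = 0"
proof -
  assume "\<And>x. x \<in> A \<Longrightarrow> c \<bullet> x = 0" "y \<in> span A"
  moreover have "span A \<subseteq> {x. c \<bullet> x = 0}"
    by (rule span_minimal) (use calculation in \<open>auto intro: subspace_hyperplane\<close>)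
  ultimately show "c \<bullet> y = 0" by auto
qed

lemma finite_gens: "finite (gens segs)"
  by (simp add: gens_def)

lemma finite_Pl: "finite (Pl w segs)"
proof -
  have "Pl w segs = (\<lambda>g. span {w, g}) ` {g \<in> gens segs. g \<notin> span {w}}"
    by (auto simp: Pl_def)
  then show ?thesis using finite_gens by simp
qed

lemma nrm_props:
  assumes "ind2 e g"
  shows "nrm (span {e, g}) \<noteq> 0" "\<And>x. x \<in> span {e, g} \<Longrightarrow> nrm (span {e, g}) \<bullet> x = 0"
proof -
  have "\<exists>n. n \<noteq> 0 \<and> (\<forall>x\<in>span {e, g}. n \<bullet> x = 0)"
  proof (intro exI conjI ballI)
    show "cross3 e g \<noteq> 0" using cross_nz[OF assms] .
    fix x assume "x \<in> span {e, g}"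
    then show "cross3 e g \<bullet> x = 0"
      by (rule perp_span[rotated]) (auto simp: dot_cross_self inner_commute)
  qed
  then have "nrm (span {e, g}) \<noteq> 0 \<and> (\<forall>x\<in>span {e, g}. nrm (span {e, g}) \<bullet> x = 0)"
    unfolding nrm_def by (rule someI_ex)
  then show "nrm (span {e, g}) \<noteq> 0" "\<And>x. x \<in> span {e, g} \<Longrightarrow> nrm (span {e, g}) \<bullet> x = 0"
    by auto
qed

lemma nrm_parallel:
  assumes "ind2 e g"
  shows "\<exists>k. k \<noteq> 0 \<and> nrm (span {e, g}) = k *\<^sub>R cross3 e g"
proof -
  have "nrm (span {e, g}) \<bullet> e = 0" "nrm (span {e, g}) \<bullet> g = 0"
    using nrm_props[OF assms] by (auto intro: span_base)
  then obtain k where "nrm (span {e, g}) = k *\<^sub>R cross3 e g" using perp_parallel[OF assms] by blast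
  moreover have "k \<noteq> 0" using calculation nrm_props(1)[OF assms] by auto
  ultimately show ?thesis by blast
qed

lemma nrm_perp_iff:
  assumes "ind2 e g"
  shows "nrm (span {e, g}) \<bullet> h = 0 \<longleftrightarrow> h \<in> span {e, g}"
proof
  assume "nrm (span {e, g}) \<bullet> h = 0"
  then have "h \<bullet> cross3 e g = 0"
    using nrm_parallel[OF assms] by (auto simp: inner_commute)
  then show "h \<in> span {e, g}" by (rule perp_in_plane[OF assms])
qed (use nrm_props[OF assms] in auto)

lemma card_bool_prod: "finite A \<Longrightarrow> card (A \<times> (UNIV::bool set)) = 2 * card A"
  by (simp add: card_cartesian_product)

lemma exists_nz_in_line:
  assumes "dim (span A) = (1::nat)"
  shows "\<exists>e\<in>A. (e::v3) \<noteq> 0 \<and> span A = span {e}"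
proof -
  have "\<exists>e\<in>A. e \<noteq> 0"
  proof (rule ccontr)
    assume "\<not> ?thesis"
    then have "A \<subseteq> {0}" by auto
    then have "A = {} \<or> A = {0}" by auto
    then show False using assms by (auto simp: dim_insert span_empty)
  qed
  then obtain e where "e \<in> A" "e \<noteq> 0" by blast
  moreover have "span A = span {e}" using calculation line_eq assms by (simp add: span_base)
  ultimately show ?thesis by blast
qed

lemma belt_upper:
  assumes Z3: "aff_dim (zset segs) = 3" and E: "E edge_of zset segs"
  shows "\<exists>e\<in>gens segs. e \<noteq> 0 \<and> direction E = span {e} \<and>
           card (belt (zset segs) E) \<le> 2 * card (Pl e segs)"
proof -
  obtain cE where cE: "E = argmx cE (zset segs)" "dim (span (Gc cE segs)) = 1"
    using edge_char[OF E] by blast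
  obtain e where e: "e \<in> Gc cE segs" "e \<noteq> 0" "span (Gc cE segs) = span {e}"
    using exists_nz_in_line[OF cE(2)] by blast
  have eg: "e \<in> gens segs" using e by (simp add: Gc_def)
  have dirE: "direction E = span {e}" using cE e dir_argmx by simp
  define \<psi> where "\<psi> = (\<lambda>(\<pi>, b). argmx (if b then nrm \<pi> else - nrm \<pi>) (zset segs))"
  have sub: "belt (zset segs) E \<subseteq> \<psi> ` (Pl e segs \<times> UNIV)"
  proof
    fix F assume "F \<in> belt (zset segs) E"
    then obtain t where F: "F facet_of zset segs" and T: "((\<lambda>x. t + x) ` E) edge_of F"
      by (auto simp: belt_def)
    obtain c where c: "c \<noteq> 0" "F = argmx c (zset segs)" "dim (span (Gc c segs)) = 2"
      using facet_char[OF F Z3] by blast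
    have "(\<lambda>x. t + x) ` E \<subseteq> F" using T by (auto simp: edge_of_def dest: face_of_imp_subset)
    then have "direction ((\<lambda>x. t + x) ` E) \<subseteq> direction F" by (rule dir_mono)
    moreover have "direction ((\<lambda>x. t + x) ` E) = span {e}" by (simp only: dir_translate dirE)
    moreover have "direction F = span (Gc c segs)" using c(2) dir_argmx by simp
    ultimately have "span {e} \<subseteq> span (Gc c segs)" by simp
    then have eG: "e \<in> span (Gc c segs)" by (auto intro: span_base)
    have "\<exists>g\<in>Gc c segs. g \<notin> span {e}"
    proof (rule ccontr)
      assume "\<not> ?thesis"
      then have "Gc c segs \<subseteq> span {e}" by auto
      then have "span (Gc c segs) \<subseteq> span {e}" by (simp add: span_minimal)
      then have "dim (span (Gc c segs)) \<le> dim (span {e})" by (rule dim_subset)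
      then show False using c(3) dim_sing[OF e(2)] by simp
    qed
    then obtain g where g: "g \<in> Gc c segs" "g \<notin> span {e}" by blast
    have ie: "ind2 e g" using g e by (simp add: ind2_def)
    have \<pi>: "span {e, g} \<in> Pl e segs" using g by (auto simp: Pl_def Gc_def)
    have ce: "c \<bullet> e = 0" using eG by (rule perp_span[rotated]) (auto simp: Gc_def)
    have cg: "c \<bullet> g = 0" using g by (simp add: Gc_def)
    obtain k where k: "c = k *\<^sub>R cross3 e g" using perp_parallel[OF ie ce cg] by blast
    obtain k' where k': "k' \<noteq> 0" "nrm (span {e, g}) = k' *\<^sub>R cross3 e g" using nrm_parallel[OF ie] by blast
    have cn: "c = (k / k') *\<^sub>R nrm (span {e, g})" using k k' by simp
    have "k \<noteq> 0" using k c(1) by auto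
    then have "k / k' \<noteq> 0" using k' by simp
    then consider "k / k' > 0" | "k / k' < 0" by linarith
    then show "F \<in> \<psi> ` (Pl e segs \<times> UNIV)"
    proof cases
      case 1
      then have "F = \<psi> (span {e, g}, True)" using c(2) cn by (simp add: \<psi>_def argmx_scale)
      then show ?thesis using \<pi> by blast
    next
      case 2
      have "c = (- (k / k')) *\<^sub>R (- nrm (span {e, g}))" using cn by simp
      then have "F = argmx ((- (k / k')) *\<^sub>R (- nrm (span {e, g}))) (zset segs)" using c(2) by simp
      also have "\<dots> = argmx (- nrm (span {e, g})) (zset segs)" using 2 by (intro argmx_scale) simp
      finally have "F = \<psi> (span {e, g}, False)" by (simp add: \<psi>_def)
      then show ?thesis using \<pi> by blast
    qed
  qed
  have "card (belt (zset segs) E) \<le> card (\<psi> ` (Pl e segs \<times> UNIV))"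
    by (rule card_mono) (use sub finite_Pl in auto)
  also have "\<dots> \<le> card (Pl e segs \<times> (UNIV::bool set))"
    by (rule card_image_le) (simp add: finite_Pl)
  also have "\<dots> = 2 * card (Pl e segs)" by (simp add: card_bool_prod finite_Pl)
  finally show ?thesis using eg e dirE by blast
qed

lemma eps_exists:
  assumes "finite S"
  shows "\<exists>\<epsilon>>0. \<forall>h\<in>S. s \<bullet> h \<noteq> 0 \<longrightarrow> \<epsilon> * \<bar>d \<bullet> h\<bar> < \<bar>s \<bullet> (h::v3)\<bar>"
proof (cases "{h\<in>S. s \<bullet> h \<noteq> 0} = {}")
  case True
  then show ?thesis by (intro exI[of _ 1]) auto
next
  case False
  let ?S = "{h\<in>S. s \<bullet> h \<noteq> 0}"
  let ?f = "\<lambda>h. \<bar>s \<bullet> h\<bar> / (\<bar>d \<bullet> h\<bar> + 1)"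
  define \<epsilon> where "\<epsilon> = Min (?f ` ?S)"
  have fin: "finite (?f ` ?S)" using assms by simp
  have pos: "\<epsilon> > 0" unfolding \<epsilon>_def using fin False
    by (subst Min_gr_iff) (auto intro!: divide_pos_pos)
  have "\<epsilon> * \<bar>d \<bullet> h\<bar> < \<bar>s \<bullet> h\<bar>" if h: "h \<in> S" "s \<bullet> h \<noteq> 0" for h
  proof -
    have le: "\<epsilon> \<le> ?f h" unfolding \<epsilon>_def using fin h by (intro Min_le) auto
    have "\<epsilon> * \<bar>d \<bullet> h\<bar> \<le> ?f h * \<bar>d \<bullet> h\<bar>" using le by (intro mult_right_mono) auto
    also have "\<dots> < \<bar>s \<bullet> h\<bar>"
    proof -
      have "?f h * \<bar>d \<bullet> h\<bar> = \<bar>s \<bullet> h\<bar> * (\<bar>d \<bullet> h\<bar> / (\<bar>d \<bullet> h\<bar> + 1))" by simp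
      also have "\<dots> < \<bar>s \<bullet> h\<bar> * 1"
        using h by (intro mult_strict_left_mono) auto
      finally show ?thesis by simp
    qed
    finally show ?thesis .
  qed
  then show ?thesis using pos by blast
qed

lemma in_span_pair: "h \<in> span {w, g} \<Longrightarrow> \<exists>\<alpha> \<beta>. h = \<alpha> *\<^sub>R w + \<beta> *\<^sub>R g"
  by (auto simp: span_breakdown_eq span_sing_iff) (metis add.commute diff_eq_eq)

lemma edge_sub:
  assumes iw: "ind2 w g" and sw: "s \<bullet> w = 0" and sg: "s \<bullet> g = 0"
    and sh: "\<And>h. h \<in> gens segs \<Longrightarrow> s \<bullet> h = 0 \<Longrightarrow> h \<in> span {w, g}"
  shows "\<exists>c'. argmx c' (zset segs) \<subseteq> argmx s (zset segs) \<and>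
             (\<forall>h\<in>gens segs. c' \<bullet> h = 0 \<longleftrightarrow> h \<in> span {w})"
proof -
  have w0: "w \<noteq> 0" and gw: "g \<notin> span {w}" using iw by (auto simp: ind2_def)
  define lam where "lam = (g \<bullet> w) / (w \<bullet> w)"
  define d where "d = g - lam *\<^sub>R w"
  have ww: "w \<bullet> w \<noteq> 0" using w0 by simp
  have dw: "d \<bullet> w = 0" unfolding d_def lam_def using ww by (simp add: inner_diff_left)
  have d0: "d \<noteq> 0"
  proof
    assume "d = 0"
    then have "g = lam *\<^sub>R w" by (simp add: d_def)
    then show False using gw by (auto simp: span_sing_iff)
  qed
  have dg: "d \<bullet> g = d \<bullet> d"
  proof -
    have "g = d + lam *\<^sub>R w" by (simp add: d_def)
    then have "d \<bullet> g = d \<bullet> d + lam * (d \<bullet> w)" by (metis inner_add_right inner_scaleR_right)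
    then show ?thesis using dw by simp
  qed
  have dgpos: "d \<bullet> g > 0" using dg d0 by simp
  have key: "h \<in> span {w, g} \<Longrightarrow> (d \<bullet> h = 0 \<longleftrightarrow> h \<in> span {w})" for h
  proof -
    assume "h \<in> span {w, g}"
    then obtain \<alpha> \<beta> where h: "h = \<alpha> *\<^sub>R w + \<beta> *\<^sub>R g" using in_span_pair by blast
    have dh: "d \<bullet> h = \<beta> * (d \<bullet> g)" using dw h by (simp add: inner_add_right)
    have "h \<in> span {w} \<longleftrightarrow> \<beta> = 0"
    proof
      assume "h \<in> span {w}"
      then obtain k where k: "h = k *\<^sub>R w" by (auto simp: span_sing_iff)
      show "\<beta> = 0"
      proof (rule ccontr)
        assume b: "\<beta> \<noteq> 0"
        have "\<beta> *\<^sub>R g = (k - \<alpha>) *\<^sub>R w" using h k by (simp add: algebra_simps)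
        then have "g = ((k - \<alpha>) / \<beta>) *\<^sub>R w" using b
          by (metis (no_types, lifting) divide_inverse_commute inverse_eq_divide scaleR_scaleR
              scaleR_one field_class.field_inverse)
        then show False using gw by (auto simp: span_sing_iff)
      qed
    next
      assume "\<beta> = 0"
      then show "h \<in> span {w}" using h by (auto simp: span_sing_iff)
    qed
    then show ?thesis using dh dgpos by simp
  qed
  obtain \<epsilon> where \<epsilon>: "\<epsilon> > 0" "\<And>h. h \<in> gens segs \<Longrightarrow> s \<bullet> h \<noteq> 0 \<Longrightarrow> \<epsilon> * \<bar>d \<bullet> h\<bar> < \<bar>s \<bullet> h\<bar>"
    using eps_exists[OF finite_gens[of segs], of s d] by blast
  define c' where "c' = s + \<epsilon> *\<^sub>R d"
  have c'h: "c' \<bullet> h = s \<bullet> h + \<epsilon> * (d \<bullet> h)" for h by (simp add: c'_def inner_add_left)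
  have nz: "c' \<bullet> h \<noteq> 0 \<and> (c' \<bullet> h < 0 \<longleftrightarrow> s \<bullet> h < 0)" if "h \<in> gens segs" "s \<bullet> h \<noteq> 0" for h
  proof -
    have "\<bar>\<epsilon> * (d \<bullet> h)\<bar> < \<bar>s \<bullet> h\<bar>" using \<epsilon> that by (simp add: abs_mult)
    then show ?thesis unfolding c'h by linarith
  qed
  have "argmx c' (zset segs) \<subseteq> argmx s (zset segs)"
    by (rule argmx_subset) (use nz in auto)
  moreover have "c' \<bullet> h = 0 \<longleftrightarrow> h \<in> span {w}" if h: "h \<in> gens segs" for h
  proof (cases "s \<bullet> h = 0")
    case True
    then have "h \<in> span {w, g}" using sh h by blast
    then show ?thesis using key True \<epsilon>(1) unfolding c'h by simp
  next
    case False
    have "h \<notin> span {w}"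
    proof
      assume "h \<in> span {w}"
      then obtain k where "h = k *\<^sub>R w" by (auto simp: span_sing_iff)
      then show False using False sw by simp
    qed
    then show ?thesis using nz[OF h False] by simp
  qed
  ultimately show ?thesis by blast
qed

lemma plane_data:
  assumes iw: "ind2 w g" and wg: "w \<in> gens segs" "g \<in> gens segs"
    and s: "s = nrm (span {w, g}) \<or> s = - nrm (span {w, g})"
  shows "span (Gc s segs) = span {w, g}" "s \<noteq> 0" "s \<bullet> w = 0" "s \<bullet> g = 0"
    "\<And>h. s \<bullet> h = 0 \<longleftrightarrow> h \<in> span {w, g}"
proof -
  have sh: "s \<bullet> h = 0 \<longleftrightarrow> h \<in> span {w, g}" for h
    using s nrm_perp_iff[OF iw, of h] by auto
  then show "\<And>h. s \<bullet> h = 0 \<longleftrightarrow> h \<in> span {w, g}" by blast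
  show "s \<noteq> 0" using s nrm_props(1)[OF iw] by auto
  show sw: "s \<bullet> w = 0" and sg: "s \<bullet> g = 0" using sh by (auto intro: span_base)
  have "Gc s segs \<subseteq> span {w, g}" using sh by (auto simp: Gc_def)
  then have "span (Gc s segs) \<subseteq> span {w, g}" by (simp add: span_minimal)
  moreover have "{w, g} \<subseteq> Gc s segs" using sw sg wg by (auto simp: Gc_def)
  then have "span {w, g} \<subseteq> span (Gc s segs)" by (rule span_mono)
  ultimately show "span (Gc s segs) = span {w, g}" by blast
qed

lemma line_Gc:
  assumes "w \<in> gens segs" "w \<noteq> 0" "\<forall>h\<in>gens segs. c' \<bullet> h = 0 \<longleftrightarrow> h \<in> span {w}"
  shows "span (Gc c' segs) = span {w}" "dim (span (Gc c' segs)) = 1"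
proof -
  have "Gc c' segs \<subseteq> span {w}" using assms by (auto simp: Gc_def)
  then have "span (Gc c' segs) \<subseteq> span {w}" by (simp add: span_minimal)
  moreover have "{w} \<subseteq> Gc c' segs" using assms by (auto simp: Gc_def intro: span_base)
  then have "span {w} \<subseteq> span (Gc c' segs)" by (rule span_mono)
  ultimately show "span (Gc c' segs) = span {w}" by blast
  then show "dim (span (Gc c' segs)) = 1" using dim_sing[OF assms(2)] by simp
qed

lemma belt_lower:
  assumes Z3: "aff_dim (zset segs) = 3" and wg: "w \<in> gens segs" and w0: "w \<noteq> 0"
    and ne: "Pl w segs \<noteq> {}"
  shows "\<exists>M. M edge_of zset segs \<and> direction M = span {w} \<and>
           2 * card (Pl w segs) \<le> card (belt (zset segs) M)"
proof -
  have gof: "\<exists>g. \<pi> = span {w, g} \<and> g \<in> gens segs \<and> ind2 w g" if "\<pi> \<in> Pl w segs" for \<pi>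
    using that w0 by (auto simp: Pl_def ind2_def)
  have edges: "\<exists>c'. argmx c' (zset segs) \<subseteq> argmx s (zset segs) \<and>
             (\<forall>h\<in>gens segs. c' \<bullet> h = 0 \<longleftrightarrow> h \<in> span {w})"
    if pis: "\<pi> \<in> Pl w segs" "s = nrm \<pi> \<or> s = - nrm \<pi>" for \<pi> s
  proof -
    obtain g where g: "\<pi> = span {w, g}" "g \<in> gens segs" "ind2 w g" using gof pis(1) by blast
    note pd = plane_data[OF g(3) wg g(2), of s]
    show ?thesis
      by (rule edge_sub[OF g(3)]) (use pd pis g in auto)
  qed
  obtain \<pi>0 where \<pi>0: "\<pi>0 \<in> Pl w segs" using ne by blast
  obtain c0 where c0: "\<forall>h\<in>gens segs. c0 \<bullet> h = 0 \<longleftrightarrow> h \<in> span {w}"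
    using edges[OF \<pi>0, of "nrm \<pi>0"] by blast
  define M where "M = argmx c0 (zset segs)"
  have Medge: "M edge_of zset segs"
    unfolding M_def by (rule argmx_is_edge) (rule line_Gc(2)[OF wg w0 c0])
  have dirM: "direction M = span {w}"
    unfolding M_def dir_argmx using line_Gc(1)[OF wg w0 c0] .
  define \<psi> where "\<psi> = (\<lambda>(\<pi>, b). argmx (if b then nrm \<pi> else - nrm \<pi>) (zset segs))"
  have dir\<psi>: "direction (\<psi> (\<pi>, b)) = \<pi>" and fac\<psi>: "\<psi> (\<pi>, b) facet_of zset segs"
    and nz: "nrm \<pi> \<noteq> 0"
    if pip: "\<pi> \<in> Pl w segs" for \<pi> b
  proof -
    obtain g where g: "\<pi> = span {w, g}" "g \<in> gens segs" "ind2 w g" using gof pip by blast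
    let ?s = "if b then nrm \<pi> else - nrm \<pi>"
    have "?s = nrm (span {w, g}) \<or> ?s = - nrm (span {w, g})" using g by auto
    note pd = plane_data[OF g(3) wg g(2) this]
    show "direction (\<psi> (\<pi>, b)) = \<pi>" unfolding \<psi>_def prod.case dir_argmx pd(1) using g(1) by simp
    show "\<psi> (\<pi>, b) facet_of zset segs" unfolding \<psi>_def
      using argmx_is_facet[OF Z3, of ?s] pd dim_pair[OF g(3)] by simp
    show "nrm \<pi> \<noteq> 0" using nrm_props(1)[OF g(3)] g by simp
  qed
  have sub: "\<psi> ` (Pl w segs \<times> UNIV) \<subseteq> belt (zset segs) M"
  proof
    fix F assume "F \<in> \<psi> ` (Pl w segs \<times> UNIV)"
    then obtain \<pi> b where pb: "\<pi> \<in> Pl w segs" "F = \<psi> (\<pi>, b)" by auto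
    let ?s = "if b then nrm \<pi> else - nrm \<pi>"
    have F: "F = argmx ?s (zset segs)" using pb by (simp add: \<psi>_def)
    have Ff: "F facet_of zset segs" using fac\<psi> pb by simp
    obtain c' where c': "argmx c' (zset segs) \<subseteq> argmx ?s (zset segs)"
      "\<forall>h\<in>gens segs. c' \<bullet> h = 0 \<longleftrightarrow> h \<in> span {w}"
      using edges[OF pb(1), of ?s] by (meson)
    obtain t where t: "argmx c' (zset segs) = (\<lambda>x. t + x) ` M"
      unfolding M_def using argmx_translate[of segs c' c0] c' c0 by blast
    have "argmx c' (zset segs) face_of F"
    proof (rule face_of_subset[OF argmx_face])
      show "argmx c' (zset segs) \<subseteq> F" using c' F by simp
      show "F \<subseteq> zset segs" using Ff by (auto simp: facet_of_def dest: face_of_imp_subset)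
    qed
    moreover have "aff_dim (argmx c' (zset segs)) = 1"
      using aff_dim_argmx line_Gc(2)[OF wg w0 c'(2)] by simp
    ultimately have "((\<lambda>x. t + x) ` M) edge_of F" using t by (simp add: edge_of_def)
    then show "F \<in> belt (zset segs) M" using Ff by (auto simp: belt_def)
  qed
  have inj: "inj_on \<psi> (Pl w segs \<times> UNIV)"
  proof (rule inj_onI)
    fix x y assume x: "x \<in> Pl w segs \<times> (UNIV::bool set)" and y: "y \<in> Pl w segs \<times> (UNIV::bool set)"
      and eq: "\<psi> x = \<psi> y"
    obtain \<pi> b where [simp]: "x = (\<pi>, b)" by fastforce
    obtain \<pi>' b' where [simp]: "y = (\<pi>', b')" by fastforce
    have p: "\<pi> \<in> Pl w segs" "\<pi>' \<in> Pl w segs" using x y by auto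
    have "\<pi> = \<pi>'" using dir\<psi>[OF p(1), of b] dir\<psi>[OF p(2), of b'] eq by simp
    moreover have "b = b'"
    proof (rule ccontr)
      assume "b \<noteq> b'"
      then have "argmx (nrm \<pi>) (zset segs) = argmx (- nrm \<pi>) (zset segs)"
        using eq \<open>\<pi> = \<pi>'\<close> by (cases b) (auto simp: \<psi>_def)
      then show False using argmx_neq_opp[OF Z3 nz[OF p(1)]] by simp
    qed
    ultimately show "x = y" by simp
  qed
  have finb: "finite (belt (zset segs) M)"
  proof (rule finite_subset)
    show "belt (zset segs) M \<subseteq> {F. F face_of zset segs}" by (auto simp: belt_def facet_of_def)
    show "finite {F. F face_of zset segs}" by (rule finite_polytope_faces[OF polytope_zset])
  qed
  have "2 * card (Pl w segs) = card (Pl w segs \<times> (UNIV::bool set))"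
    by (simp add: card_bool_prod finite_Pl)
  also have "\<dots> = card (\<psi> ` (Pl w segs \<times> UNIV))" using inj by (simp add: card_image)
  also have "\<dots> \<le> card (belt (zset segs) M)" by (rule card_mono[OF finb sub])
  finally show ?thesis using Medge dirM by blast
qed

lemma PE:
  assumes "ind2 p q" "ind2 a b" "p \<in> span {a, b}" "q \<in> span {a, b}"
  shows "span {a, b} = span {p, q}"
  using plane_eq[of p q "{a, b}"] assms dim_pair[OF assms(2)] by simp

lemma F1:
  assumes "ind2 e x" "ind2 e y" "span {e, x} \<noteq> span {e, y}"
  shows "ind2 x y"
proof -
  have "x \<noteq> 0" using assms ind2_nz by blast
  moreover have "y \<notin> span {x}"
  proof
    assume "y \<in> span {x}"
    then have "y \<in> span {e, x}" using span_mono[of "{x}" "{e, x}"] by blast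
    then have "span {e, x} = span {e, y}" using PE[OF assms(2) assms(1)] by (auto intro: span_base)
    then show False using assms(3) by simp
  qed
  ultimately show ?thesis by (simp add: ind2_def)
qed

lemma F3:
  assumes "ind2 e x" "ind2 e y" "span {e, x} \<noteq> span {e, y}"
  shows "y \<notin> span {e, x}"
proof
  assume "y \<in> span {e, x}"
  then have "span {e, x} = span {e, y}" using PE[OF assms(2) assms(1)] by (auto intro: span_base)
  then show False using assms(3) by simp
qed

lemma F1e:
  assumes "ind2 e x" "ind2 e y" "span {e, x} \<noteq> span {e, y}"
  shows "e \<notin> span {x, y}"
proof
  assume e: "e \<in> span {x, y}"
  have xy: "ind2 x y" using F1[OF assms] .
  have "span {x, y} = span {e, x}" using PE[OF assms(1) xy] e by (auto intro: span_base)
  moreover have "span {x, y} = span {e, y}" using PE[OF assms(2) xy] e by (auto intro: span_base)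
  ultimately show False using assms(3) by simp
qed

lemma ind2_e: "e \<noteq> 0 \<Longrightarrow> x \<notin> span {e} \<Longrightarrow> ind2 e x"
  by (simp add: ind2_def)

lemma mem_Pl: "g \<in> gens segs \<Longrightarrow> g \<notin> span {u} \<Longrightarrow> span {u, g} \<in> Pl u segs"
  by (auto simp: Pl_def)

lemma card4:
  assumes "finite A" "p1 \<in> A" "p2 \<in> A" "p3 \<in> A" "p4 \<in> A"
    "p1 \<noteq> p2" "p1 \<noteq> p3" "p1 \<noteq> p4" "p2 \<noteq> p3" "p2 \<noteq> p4" "p3 \<noteq> p4"
  shows "4 \<le> card A"
proof -
  have "card {p1, p2, p3, p4} = 4" using assms by simp
  moreover have "card {p1, p2, p3, p4} \<le> card A" using assms by (intro card_mono) auto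
  ultimately show ?thesis by simp
qed

lemma Hx:
  assumes "span {u, s} = span {u, s'}" "ind2 s s'" "ind2 p q" "s \<in> span {p, q}" "s' \<in> span {p, q}"
    "u \<notin> span {p, q}" "ind2 u s"
  shows False
proof -
  have "s' \<in> span {u, s}" using assms(1) by (auto intro: span_base)
  moreover have "s \<in> span {u, s}" by (auto intro: span_base)
  ultimately have "span {u, s} = span {s, s'}" using PE[OF assms(2) assms(7)] by simp
  moreover have "span {p, q} = span {s, s'}" using PE[OF assms(2) assms(3) assms(4) assms(5)] .
  moreover have "u \<in> span {u, s}" by (auto intro: span_base)
  ultimately show False using assms(6) by simp
qed

lemma Hc:
  assumes "span {u, e} = span {u, s}" "ind2 e s" "ind2 e u" "span {e, u} \<noteq> span {e, s}"
  shows False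
proof -
  have "s \<in> span {e, u}" using assms(1) by (auto simp: insert_commute intro: span_base)
  then show False using F3[OF assms(3) assms(2) assms(4)] by simp
qed

context
  fixes segs :: "(v3 \<times> v3) list" and e :: v3
  assumes e0: "e \<noteq> 0" and eG: "e \<in> gens segs"
    and H: "\<And>w. w \<in> gens segs \<Longrightarrow> w \<notin> span {e} \<Longrightarrow> card (Pl w segs) \<le> 3"
begin

lemma H4: "w \<in> gens segs \<Longrightarrow> ind2 e w \<Longrightarrow> 4 \<le> card (Pl w segs) \<Longrightarrow> False"
  using H[of w] by (auto simp: ind2_def)

lemma Glemma:
  assumes pq: "ind2 p q" and r: "r \<in> span {p, q}"
    and G: "p \<in> gens segs" "q \<in> gens segs" "r \<in> gens segs" "u \<in> gens segs"
    and ie: "ind2 e p" "ind2 e q" "ind2 e r" "ind2 e u"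
    and cl: "span {e, p} \<noteq> span {e, q}" "span {e, p} \<noteq> span {e, r}" "span {e, q} \<noteq> span {e, r}"
    and cu: "span {e, u} \<noteq> span {e, p}" "span {e, u} \<noteq> span {e, q}" "span {e, u} \<noteq> span {e, r}"
    and u: "u \<notin> span {p, q}"
  shows False
proof -
  have up: "ind2 u p" using F1[OF ie(4) ie(1) cu(1)] .
  have uq: "ind2 u q" using F1[OF ie(4) ie(2) cu(2)] .
  have ur: "ind2 u r" using F1[OF ie(4) ie(3) cu(3)] .
  have ue: "ind2 u e" using ind2_sym[OF ie(4)] .
  have pr: "ind2 p r" using F1[OF ie(1) ie(3) cl(2)] .
  have qr: "ind2 q r" using F1[OF ie(2) ie(3) cl(3)] .
  have inT: "p \<in> span {p, q}" "q \<in> span {p, q}" by (auto intro: span_base)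
  have "4 \<le> card (Pl u segs)"
  proof (rule card4[OF finite_Pl])
    show "span {u, e} \<in> Pl u segs" using ue by (intro mem_Pl[OF eG]) (simp add: ind2_def)
    show "span {u, p} \<in> Pl u segs" using up by (intro mem_Pl[OF G(1)]) (simp add: ind2_def)
    show "span {u, q} \<in> Pl u segs" using uq by (intro mem_Pl[OF G(2)]) (simp add: ind2_def)
    show "span {u, r} \<in> Pl u segs" using ur by (intro mem_Pl[OF G(3)]) (simp add: ind2_def)
    show "span {u, e} \<noteq> span {u, p}" using Hc[OF _ ie(1) ie(4) cu(1)] by blast
    show "span {u, e} \<noteq> span {u, q}" using Hc[OF _ ie(2) ie(4) cu(2)] by blast
    show "span {u, e} \<noteq> span {u, r}" using Hc[OF _ ie(3) ie(4) cu(3)] by blast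
    show "span {u, p} \<noteq> span {u, q}" using Hx[OF _ pq pq inT u up] by blast
    show "span {u, p} \<noteq> span {u, r}" using Hx[OF _ pr pq inT(1) r u up] by blast
    show "span {u, q} \<noteq> span {u, r}" using Hx[OF _ qr pq inT(2) r u uq] by blast
  qed
  then show False using H4[OF G(4) ie(4)] by simp
qed

lemma Slemma:
  assumes bc: "ind2 b c" and a: "a \<in> span {b, c}"
    and G: "a \<in> gens segs" "b \<in> gens segs" "c \<in> gens segs" "x \<in> gens segs" "u \<in> gens segs"
    and ie: "ind2 e a" "ind2 e b" "ind2 e c" "ind2 e x" "ind2 e u"
    and cl: "span {e, a} \<noteq> span {e, b}" "span {e, a} \<noteq> span {e, c}" "span {e, a} \<noteq> span {e, x}"
       "span {e, b} \<noteq> span {e, c}" "span {e, b} \<noteq> span {e, x}" "span {e, c} \<noteq> span {e, x}"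
    and cu: "span {e, u} = span {e, a}"
    and u: "u \<notin> span {b, c}"
  shows False
proof -
  have be: "ind2 b e" using ind2_sym[OF ie(2)] .
  have ce: "ind2 c e" using ind2_sym[OF ie(3)] .
  have bu: "ind2 b u" using F1[OF ie(2) ie(5)] cl(1) cu by simp
  have cu': "ind2 c u" using F1[OF ie(3) ie(5)] cl(2) cu by simp
  have bx: "ind2 b x" using F1[OF ie(2) ie(4) cl(5)] .
  have cx: "ind2 c x" using F1[OF ie(3) ie(4) cl(6)] .
  have cb: "ind2 c b" using ind2_sym[OF bc] .
  have bcs: "span {c, b} = span {b, c}" by (simp add: insert_commute)
  have inT: "b \<in> span {b, c}" "c \<in> span {b, c}" by (auto intro: span_base)
  have alt_b: "span {b, x} = span {b, c} \<or> span {b, x} = span {b, u}"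
  proof (rule ccontr)
    assume nb: "\<not> ?thesis"
    have "4 \<le> card (Pl b segs)"
    proof (rule card4[OF finite_Pl])
      show "span {b, e} \<in> Pl b segs" using be by (intro mem_Pl[OF eG]) (simp add: ind2_def)
      show "span {b, c} \<in> Pl b segs" using bc by (intro mem_Pl[OF G(3)]) (simp add: ind2_def)
      show "span {b, u} \<in> Pl b segs" using bu by (intro mem_Pl[OF G(5)]) (simp add: ind2_def)
      show "span {b, x} \<in> Pl b segs" using bx by (intro mem_Pl[OF G(4)]) (simp add: ind2_def)
      show "span {b, e} \<noteq> span {b, c}" using Hc[OF _ ie(3) ie(2) cl(4)] by blast
      show "span {b, e} \<noteq> span {b, u}" using Hc[OF _ ie(5) ie(2)] cl(1) cu by auto
      show "span {b, e} \<noteq> span {b, x}" using Hc[OF _ ie(4) ie(2) cl(5)] by blast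
      show "span {b, c} \<noteq> span {b, u}" using u by (auto intro: span_base)
      show "span {b, c} \<noteq> span {b, x}" using nb by auto
      show "span {b, u} \<noteq> span {b, x}" using nb by auto
    qed
    then show False using H4[OF G(2) ie(2)] by simp
  qed
  have alt_c: "span {c, x} = span {b, c} \<or> span {c, x} = span {c, u}"
  proof (rule ccontr)
    assume nc: "\<not> ?thesis"
    have "4 \<le> card (Pl c segs)"
    proof (rule card4[OF finite_Pl])
      show "span {c, e} \<in> Pl c segs" using ce by (intro mem_Pl[OF eG]) (simp add: ind2_def)
      show "span {c, b} \<in> Pl c segs" using cb by (intro mem_Pl[OF G(2)]) (simp add: ind2_def)
      show "span {c, u} \<in> Pl c segs" using cu' by (intro mem_Pl[OF G(5)]) (simp add: ind2_def)
      show "span {c, x} \<in> Pl c segs" using cx by (intro mem_Pl[OF G(4)]) (simp add: ind2_def)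
      show "span {c, e} \<noteq> span {c, b}" using Hc[OF _ ie(2) ie(3)] cl(4) by metis
      show "span {c, e} \<noteq> span {c, u}" using Hc[OF _ ie(5) ie(3)] cl(2) cu by auto
      show "span {c, e} \<noteq> span {c, x}" using Hc[OF _ ie(4) ie(3) cl(6)] by blast
      show "span {c, b} \<noteq> span {c, u}" using u bcs by (auto intro: span_base)
      show "span {c, b} \<noteq> span {c, x}" using nc bcs by auto
      show "span {c, u} \<noteq> span {c, x}" using nc by auto
    qed
    then show False using H4[OF G(3) ie(3)] by simp
  qed
  show False
  proof (cases "x \<in> span {b, c}")
    case True
    show False
    proof (rule Glemma[OF bc True G(2) G(3) G(4) G(5) ie(2) ie(3) ie(4) ie(5) cl(4) cl(5) cl(6) _ _ _ u])
      show "span {e, u} \<noteq> span {e, b}" using cu cl(1) by simp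
      show "span {e, u} \<noteq> span {e, c}" using cu cl(2) by simp
      show "span {e, u} \<noteq> span {e, x}" using cu cl(3) by simp
    qed
  next
    case False
    have xb: "span {b, x} = span {b, u}"
      using alt_b False by (auto intro: span_base)
    have xc: "span {c, x} = span {c, u}"
      using alt_c False by (auto intro: span_base)
    show False
    proof (cases "u \<in> span {x}")
      case True
      then have "u \<in> span {e, x}" using span_mono[of "{x}" "{e, x}"] by blast
      then show False using F3[OF ie(4) ie(5)] cl(3) cu by auto
    next
      case nux: False
      have x0: "x \<noteq> 0" using ie(4) ind2_nz by blast
      have xu: "ind2 x u" using x0 nux by (simp add: ind2_def)
      have "span {b, u} = span {x, u}"
        using PE[OF xu bu] xb by (auto intro: span_base)
      moreover have "span {c, u} = span {x, u}"
        using PE[OF xu cu'] xc by (auto intro: span_base)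
      ultimately have "span {b, u} = span {c, u}" by simp
      then have "c \<in> span {b, u}" by (auto intro: span_base)
      then have "span {b, u} = span {b, c}" using PE[OF bc bu] by (auto intro: span_base)
      then have "u \<in> span {b, c}" by (metis insert_iff span_base)
      then show False using u by simp
    qed
  qed
qed

lemma Core:
  assumes c: "c \<in> span {a, b}"
    and G: "a \<in> gens segs" "b \<in> gens segs" "c \<in> gens segs" "x \<in> gens segs"
    and ie: "ind2 e a" "ind2 e b" "ind2 e c" "ind2 e x"
    and cl: "span {e, a} \<noteq> span {e, b}" "span {e, a} \<noteq> span {e, c}" "span {e, a} \<noteq> span {e, x}"
       "span {e, b} \<noteq> span {e, c}" "span {e, b} \<noteq> span {e, x}" "span {e, c} \<noteq> span {e, x}"
    and NP: "\<exists>u\<in>gens segs. u \<notin> span {a, b} \<and> u \<notin> span {e}"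
  shows False
proof -
  have ab: "ind2 a b" using F1[OF ie(1) ie(2) cl(1)] .
  have ac: "ind2 a c" using F1[OF ie(1) ie(3) cl(2)] .
  have bc: "ind2 b c" using F1[OF ie(2) ie(3) cl(4)] .
  have T1: "span {a, b} = span {b, c}" using PE[OF bc ab] c by (auto intro: span_base)
  have T2: "span {a, b} = span {a, c}" using PE[OF ac ab] c by (auto intro: span_base)
  obtain u where u: "u \<in> gens segs" "u \<notin> span {a, b}" "u \<notin> span {e}" using NP by blast
  have ieu: "ind2 e u" using u(3) e0 by (simp add: ind2_def)
  have aT: "a \<in> span {a, b}" and bT: "b \<in> span {a, b}" by (auto intro: span_base)
  consider "span {e, u} = span {e, a}" | "span {e, u} = span {e, b}" | "span {e, u} = span {e, c}"
    | "span {e, u} \<noteq> span {e, a}" "span {e, u} \<noteq> span {e, b}" "span {e, u} \<noteq> span {e, c}"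
    by blast
  then show False
  proof cases
    case 1
    show False
      by (rule Slemma[OF bc _ G(1) G(2) G(3) G(4) u(1) ie ieu cl 1])
        (use aT bT T1 u(2) in auto)
  next
    case 2
    show False
      by (rule Slemma[OF ac _ G(2) G(1) G(3) G(4) u(1) ie(2) ie(1) ie(3) ie(4) ieu _ _ _ cl(2) cl(3) cl(6) 2])
        (use aT bT T2 u(2) cl in auto)
  next
    case 3
    show False
      by (rule Slemma[OF ab _ G(3) G(1) G(2) G(4) u(1) ie(3) ie(1) ie(2) ie(4) ieu _ _ _ cl(1) cl(3) cl(5) 3])
        (use c u(2) cl in auto)
  next
    case 4
    show False
      by (rule Glemma[OF ab c G(1) G(2) G(3) u(1) ie(1) ie(2) ie(3) ieu cl(1) cl(2) cl(4) 4 u(2)])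
  qed
qed

lemma Step1:
  assumes card: "4 \<le> card (Pl e segs)"
    and NP: "\<And>a b. ind2 a b \<Longrightarrow> a \<in> gens segs \<Longrightarrow> b \<in> gens segs \<Longrightarrow> e \<notin> span {a, b} \<Longrightarrow>
               \<exists>u\<in>gens segs. u \<notin> span {a, b} \<and> u \<notin> span {e}"
  shows False
proof -
  obtain p1 p2 p3 p4 where p: "p1 \<in> Pl e segs" "p2 \<in> Pl e segs" "p3 \<in> Pl e segs" "p4 \<in> Pl e segs"
    "p1 \<noteq> p2" "p1 \<noteq> p3" "p1 \<noteq> p4" "p2 \<noteq> p3" "p2 \<noteq> p4" "p3 \<noteq> p4"
  proof -
    obtain B where B0: "B \<subseteq> Pl e segs" "card B = 4"
      using obtain_subset_with_card_n[OF card] by blast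
    then have B: "B \<subseteq> Pl e segs" "card B = Suc (Suc (Suc (Suc 0)))" by simp_all
    obtain b1 B1 where 1: "B = insert b1 B1" "b1 \<notin> B1" "card B1 = Suc (Suc (Suc 0))"
      using card_eq_SucD[OF B(2)] by blast
    obtain b2 B2 where 2: "B1 = insert b2 B2" "b2 \<notin> B2" "card B2 = Suc (Suc 0)"
      using card_eq_SucD[OF 1(3)] by blast
    obtain b3 B3 where 3: "B2 = insert b3 B3" "b3 \<notin> B3" "card B3 = Suc 0"
      using card_eq_SucD[OF 2(3)] by blast
    obtain b4 B4 where 4: "B3 = insert b4 B4" "B4 = {}"
      using card_eq_SucD[OF 3(3)] by blast
    show ?thesis
      by (rule that[of b1 b2 b3 b4]) (use B(1) 1 2 3 4 in auto)
  qed
  have "\<exists>x. p1 = span {e, x} \<and> x \<in> gens segs \<and> x \<notin> span {e}" using p(1) unfolding Pl_def by blast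
  then obtain x1 where x1: "p1 = span {e, x1}" "x1 \<in> gens segs" "x1 \<notin> span {e}" by blast
  have "\<exists>x. p2 = span {e, x} \<and> x \<in> gens segs \<and> x \<notin> span {e}" using p(2) unfolding Pl_def by blast
  then obtain x2 where x2: "p2 = span {e, x2}" "x2 \<in> gens segs" "x2 \<notin> span {e}" by blast
  have "\<exists>x. p3 = span {e, x} \<and> x \<in> gens segs \<and> x \<notin> span {e}" using p(3) unfolding Pl_def by blast
  then obtain x3 where x3: "p3 = span {e, x3}" "x3 \<in> gens segs" "x3 \<notin> span {e}" by blast
  have "\<exists>x. p4 = span {e, x} \<and> x \<in> gens segs \<and> x \<notin> span {e}" using p(4) unfolding Pl_def by blast
  then obtain x4 where x4: "p4 = span {e, x4}" "x4 \<in> gens segs" "x4 \<notin> span {e}" by blast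
  have ie: "ind2 e x1" "ind2 e x2" "ind2 e x3" "ind2 e x4"
    using x1(3) x2(3) x3(3) x4(3) e0 by (simp_all add: ind2_def)
  have cl: "span {e, x1} \<noteq> span {e, x2}" "span {e, x1} \<noteq> span {e, x3}" "span {e, x1} \<noteq> span {e, x4}"
       "span {e, x2} \<noteq> span {e, x3}" "span {e, x2} \<noteq> span {e, x4}" "span {e, x3} \<noteq> span {e, x4}"
    using p(5-10) unfolding x1(1) x2(1) x3(1) x4(1) .
  have NP': "\<exists>u\<in>gens segs. u \<notin> span {a, b} \<and> u \<notin> span {e}"
    if "a \<in> gens segs" "b \<in> gens segs" "ind2 e a" "ind2 e b" "span {e, a} \<noteq> span {e, b}" for a b
    using NP[OF F1[OF that(3-5)] that(1,2) F1e[OF that(3-5)]] .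
  have h12: "ind2 x1 x2" using F1[OF ie(1) ie(2) cl(1)] .
  have h13: "ind2 x1 x3" using F1[OF ie(1) ie(3) cl(2)] .
  have h14: "ind2 x1 x4" using F1[OF ie(1) ie(4) cl(3)] .
  have h1e: "ind2 x1 e" using ind2_sym[OF ie(1)] .
  consider "span {x1, x2} = span {x1, x3}" | "span {x1, x2} = span {x1, x4}" | "span {x1, x3} = span {x1, x4}"
    | "span {x1, x2} \<noteq> span {x1, x3}" "span {x1, x2} \<noteq> span {x1, x4}" "span {x1, x3} \<noteq> span {x1, x4}"
    by blast
  then show False
  proof cases
    case 1
    then have "x3 \<in> span {x1, x2}" by (auto intro: span_base)
    then show False
      by (rule Core[OF _ x1(2) x2(2) x3(2) x4(2) ie cl NP'[OF x1(2) x2(2) ie(1) ie(2) cl(1)]])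
  next
    case 2
    then have "x4 \<in> span {x1, x2}" by (auto intro: span_base)
    then show False
      by (rule Core[OF _ x1(2) x2(2) x4(2) x3(2) ie(1) ie(2) ie(4) ie(3) cl(1) cl(3) cl(2) cl(5) cl(4) _
            NP'[OF x1(2) x2(2) ie(1) ie(2) cl(1)]]) (use cl(6) in auto)
  next
    case 3
    then have "x4 \<in> span {x1, x3}" by (auto intro: span_base)
    then show False
      by (rule Core[OF _ x1(2) x3(2) x4(2) x2(2) ie(1) ie(3) ie(4) ie(2) cl(2) cl(3) cl(1) cl(6) _ _
            NP'[OF x1(2) x3(2) ie(1) ie(3) cl(2)]]) (use cl in auto)
  next
    case 4
    have "4 \<le> card (Pl x1 segs)"
    proof (rule card4[OF finite_Pl])
      show "span {x1, e} \<in> Pl x1 segs" using h1e by (intro mem_Pl[OF eG]) (simp add: ind2_def)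
      show "span {x1, x2} \<in> Pl x1 segs" using h12 by (intro mem_Pl[OF x2(2)]) (simp add: ind2_def)
      show "span {x1, x3} \<in> Pl x1 segs" using h13 by (intro mem_Pl[OF x3(2)]) (simp add: ind2_def)
      show "span {x1, x4} \<in> Pl x1 segs" using h14 by (intro mem_Pl[OF x4(2)]) (simp add: ind2_def)
      show "span {x1, e} \<noteq> span {x1, x2}" using Hc[OF _ ie(2) ie(1) cl(1)] by blast
      show "span {x1, e} \<noteq> span {x1, x3}" using Hc[OF _ ie(3) ie(1) cl(2)] by blast
      show "span {x1, e} \<noteq> span {x1, x4}" using Hc[OF _ ie(4) ie(1) cl(3)] by blast
    qed (use 4 in auto)
    then show False using H4[OF x1(2) ie(1)] by simp
  qed
qed

end

lemma comb:
  assumes e0: "e \<noteq> 0" and eG: "e \<in> gens segs" and card: "4 \<le> card (Pl e segs)"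
    and NP: "\<And>a b. ind2 a b \<Longrightarrow> a \<in> gens segs \<Longrightarrow> b \<in> gens segs \<Longrightarrow> e \<notin> span {a, b} \<Longrightarrow>
               \<exists>u\<in>gens segs. u \<notin> span {a, b} \<and> u \<notin> span {e}"
  shows "\<exists>w\<in>gens segs. w \<notin> span {e} \<and> 4 \<le> card (Pl w segs)"
proof (rule ccontr)
  assume nt: "\<not> ?thesis"
  have H: "card (Pl w segs) \<le> 3" if "w \<in> gens segs" "w \<notin> span {e}" for w
  proof -
    have "\<not> 4 \<le> card (Pl w segs)" using nt that by blast
    then show ?thesis by simp
  qed
  show False by (rule Step1[of e segs, OF e0 eG H card NP])
qed

lemma seg_line:
  fixes p e :: v3 and \<alpha> \<beta> :: real
  shows "closed_segment (p + \<alpha> *\<^sub>R e) (p + \<beta> *\<^sub>R e) = (\<lambda>t. p + t *\<^sub>R e) ` closed_segment \<alpha> \<beta>"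
proof -
  have lin: "linear (\<lambda>t::real. t *\<^sub>R e)" by (simp add: linear_scaleR_left)
  have "closed_segment (p + \<alpha> *\<^sub>R e) (p + \<beta> *\<^sub>R e) = (\<lambda>x. p + x) ` closed_segment (\<alpha> *\<^sub>R e) (\<beta> *\<^sub>R e)"
    by (rule closed_segment_translation)
  also have "closed_segment (\<alpha> *\<^sub>R e) (\<beta> *\<^sub>R e) = (\<lambda>t. t *\<^sub>R e) ` closed_segment \<alpha> \<beta>"
    using closed_segment_linear_image[OF lin, of \<alpha> \<beta>] by simp
  finally show ?thesis by (simp add: image_image)
qed

lemma lin_plus:
  fixes p q e :: v3
  assumes "\<alpha> \<le> \<beta>" "\<gamma> \<le> \<delta>"
  shows "(\<lambda>t. p + t *\<^sub>R e) ` {\<alpha>..\<beta>} + (\<lambda>t. q + t *\<^sub>R e) ` {\<gamma>..\<delta>} =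
         (\<lambda>t. (p + q) + t *\<^sub>R e) ` {\<alpha> + \<gamma>..\<beta> + \<delta>}"
proof (rule set_eqI, rule iffI)
  fix z assume "z \<in> (\<lambda>t. p + t *\<^sub>R e) ` {\<alpha>..\<beta>} + (\<lambda>t. q + t *\<^sub>R e) ` {\<gamma>..\<delta>}"
  then obtain t s where ts: "t \<in> {\<alpha>..\<beta>}" "s \<in> {\<gamma>..\<delta>}" "z = (p + t *\<^sub>R e) + (q + s *\<^sub>R e)"
    by (auto simp: set_plus_def)
  then have "z = (p + q) + (t + s) *\<^sub>R e" by (simp add: algebra_simps)
  moreover have "t + s \<in> {\<alpha> + \<gamma>..\<beta> + \<delta>}" using ts by auto
  ultimately show "z \<in> (\<lambda>t. (p + q) + t *\<^sub>R e) ` {\<alpha> + \<gamma>..\<beta> + \<delta>}" by blast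
next
  fix z assume "z \<in> (\<lambda>t. (p + q) + t *\<^sub>R e) ` {\<alpha> + \<gamma>..\<beta> + \<delta>}"
  then obtain r where r: "r \<in> {\<alpha> + \<gamma>..\<beta> + \<delta>}" "z = (p + q) + r *\<^sub>R e" by auto
  define t where "t = min \<beta> (r - \<gamma>)"
  define s where "s = r - t"
  have t: "t \<in> {\<alpha>..\<beta>}" using r assms by (auto simp: t_def)
  have s: "s \<in> {\<gamma>..\<delta>}" using r assms by (auto simp: s_def t_def)
  have "z = (p + t *\<^sub>R e) + (q + s *\<^sub>R e)" using r(2) by (simp add: s_def algebra_simps)
  moreover have "p + t *\<^sub>R e \<in> (\<lambda>t. p + t *\<^sub>R e) ` {\<alpha>..\<beta>}" using t by blast
  moreover have "q + s *\<^sub>R e \<in> (\<lambda>t. q + t *\<^sub>R e) ` {\<gamma>..\<delta>}" using s by blast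
  ultimately show "z \<in> (\<lambda>t. p + t *\<^sub>R e) ` {\<alpha>..\<beta>} + (\<lambda>t. q + t *\<^sub>R e) ` {\<gamma>..\<delta>}"
    unfolding set_plus_def by blast
qed

lemma lin_repr:
  assumes "\<And>g. g \<in> gens segs \<Longrightarrow> g \<in> span {e}"
  shows "\<exists>p \<alpha> \<beta>. \<alpha> \<le> \<beta> \<and> zset segs = (\<lambda>t. p + t *\<^sub>R e) ` {\<alpha>..\<beta>}"
  using assms
proof (induction segs)
  case Nil
  show ?case by (intro exI[of _ 0] exI[of _ "0::real"]) (auto simp: zset_def)
next
  case (Cons ab segs)
  obtain p \<alpha> \<beta> where IH: "\<alpha> \<le> \<beta>" "zset segs = (\<lambda>t. p + t *\<^sub>R e) ` {\<alpha>..\<beta>}"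
    using Cons by (auto simp: gens_def)
  obtain a b where ab: "ab = (a, b)" by fastforce
  have "b - a \<in> span {e}" using Cons.prems ab by (auto simp: gens_def)
  then obtain k where k: "b - a = k *\<^sub>R e" by (auto simp: span_sing_iff)
  have "closed_segment a b = closed_segment (a + 0 *\<^sub>R e) (a + k *\<^sub>R e)"
    using k by (metis add.commute add_0 diff_add_cancel scale_zero_left)
  also have "\<dots> = (\<lambda>t. a + t *\<^sub>R e) ` closed_segment 0 k" by (rule seg_line)
  also have "closed_segment 0 k = {min 0 k..max 0 k}"
    by (auto simp: closed_segment_eq_real_ivl)
  finally have seg: "closed_segment a b = (\<lambda>t. a + t *\<^sub>R e) ` {min 0 k..max 0 k}" .
  have "zset (ab # segs) = closed_segment a b + zset segs" by (simp add: zset_def ab)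
  also have "\<dots> = (\<lambda>t. (a + p) + t *\<^sub>R e) ` {min 0 k + \<alpha>..max 0 k + \<beta>}"
    unfolding seg IH(2) by (rule lin_plus) (use IH(1) in auto)
  finally show ?case using IH(1) by (intro exI[of _ "a + p"] exI[of _ "min 0 k + \<alpha>"] exI[of _ "max 0 k + \<beta>"]) auto
qed

lemma zset_filter:
  "zset segs = zset (filter P segs) + zset (filter (\<lambda>x. \<not> P x) segs)"
  by (induction segs) (auto simp: zset_def add_ac)

lemma gens_filter: "gens (filter P segs) = (\<lambda>ab. snd ab - fst ab) ` {ab \<in> set segs. P ab}"
  by (auto simp: gens_def)

lemma prism_lemma:
  assumes ab: "ind2 a b" and aG: "a \<in> gens segs" and bG: "b \<in> gens segs" and eG: "e \<in> gens segs"
    and eT: "e \<notin> span {a, b}" and all: "\<And>u. u \<in> gens segs \<Longrightarrow> u \<in> span {a, b} \<or> u \<in> span {e}"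
  shows "prism (zset segs)"
proof -
  define T where "T = span {a, b}"
  define P1 where "P1 = (\<lambda>ab::v3 \<times> v3. snd ab - fst ab \<in> T)"
  define s1 where "s1 = filter P1 segs"
  define s2 where "s2 = filter (\<lambda>x. \<not> P1 x) segs"
  have Zeq: "zset segs = zset s1 + zset s2" unfolding s1_def s2_def by (rule zset_filter)
  have g1: "gens s1 = {g \<in> gens segs. g \<in> T}"
    unfolding s1_def gens_filter P1_def by (auto simp: gens_def)
  have g2: "gens s2 = {g \<in> gens segs. g \<notin> T}"
    unfolding s2_def gens_filter P1_def by (auto simp: gens_def)
  have e0: "e \<noteq> 0" using eT span_zero by auto
  have aT: "a \<in> T" and bT: "b \<in> T" by (auto simp: T_def intro: span_base)
  have "span (gens s1) \<subseteq> T" unfolding g1 T_def by (rule span_minimal) auto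
  then have "dim (span (gens s1)) \<le> dim T" by (rule dim_subset)
  then have d1: "dim (span (gens s1)) \<le> 2" using dim_pair[OF ab] by (simp add: T_def)
  have "a \<in> span (gens s1)" "b \<in> span (gens s1)" using aT bT aG bG g1 by (auto intro: span_base)
  then have sp1: "span (gens s1) = span {a, b}" using plane_eq[OF ab] d1 by simp
  have affQ: "aff_dim (zset s1) = 2" using aff_dim_zset[of s1] sp1 dim_pair[OF ab] by simp
  have dirQ: "direction (zset s1) = span {a, b}" using dir_zset[of s1] sp1 by simp
  have "g \<in> span {e}" if "g \<in> gens s2" for g using that all g2 T_def by auto
  then obtain p \<alpha> \<beta> where pab: "\<alpha> \<le> \<beta>" "zset s2 = (\<lambda>t. p + t *\<^sub>R e) ` {\<alpha>..\<beta>}"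
    using lin_repr[of s2 e] by blast
  have seg: "zset s2 = closed_segment (p + \<alpha> *\<^sub>R e) (p + \<beta> *\<^sub>R e)"
    unfolding seg_line pab(2) using pab(1) by (simp add: closed_segment_eq_real_ivl)
  have "\<alpha> \<noteq> \<beta>"
  proof
    assume "\<alpha> = \<beta>"
    then have "zset s2 = {p + \<alpha> *\<^sub>R e}" using pab by simp
    then have "direction (zset s2) = {0}" by (simp add: dir_sing)
    moreover have "e \<in> gens s2" using eG eT g2 T_def by simp
    then have "e \<in> direction (zset s2)" by (simp add: dir_zset span_base)
    ultimately show False using e0 by simp
  qed
  then have ab_lt: "\<alpha> < \<beta>" using pab(1) by simp
  have diff: "(p + \<beta> *\<^sub>R e) - (p + \<alpha> *\<^sub>R e) = (\<beta> - \<alpha>) *\<^sub>R e" by (simp add: algebra_simps)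
  have ne: "p + \<alpha> *\<^sub>R e \<noteq> p + \<beta> *\<^sub>R e" using ab_lt e0 diff by (metis diff_self scale_eq_0_iff less_irrefl eq_iff_diff_eq_0)
  have notin: "(p + \<beta> *\<^sub>R e) - (p + \<alpha> *\<^sub>R e) \<notin> direction (zset s1)"
  proof
    assume "(p + \<beta> *\<^sub>R e) - (p + \<alpha> *\<^sub>R e) \<in> direction (zset s1)"
    then have "(\<beta> - \<alpha>) *\<^sub>R e \<in> span {a, b}" using diff dirQ by simp
    then have "(1 / (\<beta> - \<alpha>)) *\<^sub>R ((\<beta> - \<alpha>) *\<^sub>R e) \<in> span {a, b}" by (rule span_scale)
    then have "e \<in> span {a, b}" using ab_lt by simp
    then show False using eT by simp
  qed
  have "zset segs = {x + y |x y. x \<in> zset s1 \<and> y \<in> closed_segment (p + \<alpha> *\<^sub>R e) (p + \<beta> *\<^sub>R e)}"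
    unfolding Zeq seg by (auto simp: set_plus_def)
  then show ?thesis unfolding prism_def
    using polytope_zset[of s1] affQ ne notin by blast
qed

theorem lemma4p5:
  fixes P E :: "(real^3) set"
  assumes "zonotope P"
    and "aff_dim P = 3"
    and "\<not> prism P"
    and "E edge_of P"
    and "card (belt P E) = 8"
  shows "\<exists>M. M edge_of P \<and> direction M \<noteq> direction E \<and> card (belt P M) \<ge> 8"
proof -
  obtain segs where "P = msum_list (map (\<lambda>(a, b). closed_segment a b) segs)"
    using assms(1) unfolding zonotope_def by blast
  then have Pz: "P = zset segs" by (simp add: msum_list_eq_sum_list zset_def)
  have Z3: "aff_dim (zset segs) = 3" using assms(2) Pz by simp
  obtain e where e: "e \<in> gens segs" "e \<noteq> 0" "direction E = span {e}"
    "card (belt (zset segs) E) \<le> 2 * card (Pl e segs)"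
    using belt_upper[OF Z3, of E] assms(4) Pz by blast
  have c4: "4 \<le> card (Pl e segs)" using e(4) assms(5) Pz by simp
  have NP: "\<exists>u\<in>gens segs. u \<notin> span {a, b} \<and> u \<notin> span {e}"
    if "ind2 a b" "a \<in> gens segs" "b \<in> gens segs" "e \<notin> span {a, b}" for a b
  proof (rule ccontr)
    assume "\<not> ?thesis"
    then have "\<And>u. u \<in> gens segs \<Longrightarrow> u \<in> span {a, b} \<or> u \<in> span {e}" by blast
    then have "prism (zset segs)" using prism_lemma[OF that(1-3) e(1) that(4)] by blast
    then show False using assms(3) Pz by simp
  qed
  obtain w where w: "w \<in> gens segs" "w \<notin> span {e}" "4 \<le> card (Pl w segs)"
    using comb[OF e(2) e(1) c4 NP] by blast
  have w0: "w \<noteq> 0" using w(2) span_zero by auto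
  have "Pl w segs \<noteq> {}" using w(3) by auto
  then obtain M where M: "M edge_of zset segs" "direction M = span {w}"
    "2 * card (Pl w segs) \<le> card (belt (zset segs) M)"
    using belt_lower[OF Z3 w(1) w0] by blast
  have "direction M \<noteq> direction E"
  proof
    assume "direction M = direction E"
    then have "w \<in> span {e}" using M(2) e(3) by (metis insertI1 span_base)
    then show False using w(2) by simp
  qed
  moreover have "card (belt P M) \<ge> 8" using M(3) w(3) Pz by simp
  ultimately show ?thesis using M(1) Pz by blast
qed

end
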